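(* Let $v_1\ge v_2>0$, $m\in\mathbb{Z}_{\ge1}$ and $0<b<m$. If a strategy profile $(X,Y)$ with $\mathbf{E}(X)=m$ and $\mathbf{E}(Y)=b$ is a Nash equilibrium of the discrete all-pay auction with valuations $v_1,v_2$, then $m=v_2/2$, $(X,Y)$ is a Nash equilibrium of the General Lotto game $\Gamma(m,b)$, and $X=U_{\mathrm{O}}^m$.
   Context: Discrete all-pay auction: two players, 1 and 2, value a prize at $v_1$ and $v_2$ respectively, where $v_1\ge v_2>0$. A (mixed) strategy is a probability distribution on $\mathbb{Z}_{\ge 0}$ with finite mean, identified with a $\mathbb{Z}_{\ge0}$-valued random variable; the two players' choices are independent. If player 1 uses $X$ and player 2 uses $Y$, the expected payoffs are $P^1(X,Y)=v_1\Pr(X>Y)+\frac{v_1}{2}\Pr(X=Y)-\mathbf{E}(X)$ and $P^2(Y,X)=v_2\Pr(Y>X)+\frac{v_2}{2}\Pr(X=Y)-\mathbf{E}(Y)$. A Nash equilibrium of the all-pay auction is a pair $(X,Y)$ with $P^1(X,Y)\ge P^1(X',Y)$ and $P^2(Y,X)\ge P^2(Y',X)$ for all strategies $X',Y'$. Discrete General Lotto game: for reals $a,b\ge 0$, in $\Gamma(a,b)$ player 1 chooses a distribution $X$ on $\mathbb{Z}_{\ge0}$ with $\mathbf{E}(X)=a$ and player 2 chooses a distribution $Y$ on $\mathbb{Z}_{\ge 0}$ with $\mathbf{E}(Y)=b$ (independently); the payoff to player 1 is $H(X,Y)=\Pr(X>Y)-\Pr(X<Y)$ and to player 2 is $H(Y,X)=-H(X,Y)$.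 A Nash equilibrium of $\Gamma(a,b)$ is a pair $(X,Y)$ from these strategy sets such that neither player can increase her payoff by switching to another strategy in her own strategy set. For $m\ge1$, $U_{\mathrm{O}}^m$ is the uniform distribution on $\{1,3,\dots,2m-1\}$. *)

theory Defs
  imports "HOL-Probability.Probability"
begin

definition strategy :: "nat pmf \<Rightarrow> bool" where
  "strategy X \<longleftrightarrow> integrable (measure_pmf X) (\<lambda>n. real n)"

definition mean :: "nat pmf \<Rightarrow> real" where
  "mean X = measure_pmf.expectation X (\<lambda>n. real n)"

definition prob_gt :: "nat pmf \<Rightarrow> nat pmf \<Rightarrow> real" where
  "prob_gt X Y = measure_pmf.prob (pair_pmf X Y) {p. fst p > snd p}"

definition prob_eq :: "nat pmf \<Rightarrow> nat pmf \<Rightarrow> real" where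
  "prob_eq X Y = measure_pmf.prob (pair_pmf X Y) {p. fst p = snd p}"

definition payoff1 :: "real \<Rightarrow> nat pmf \<Rightarrow> nat pmf \<Rightarrow> real" where
  "payoff1 v1 X Y = v1 * prob_gt X Y + v1 / 2 * prob_eq X Y - mean X"

definition payoff2 :: "real \<Rightarrow> nat pmf \<Rightarrow> nat pmf \<Rightarrow> real" where
  "payoff2 v2 Y X = v2 * prob_gt Y X + v2 / 2 * prob_eq X Y - mean Y"

definition allpay_NE :: "real \<Rightarrow> real \<Rightarrow> nat pmf \<Rightarrow> nat pmf \<Rightarrow> bool" where
  "allpay_NE v1 v2 X Y \<longleftrightarrow> strategy X \<and> strategy Y \<and>
     (\<forall>X'. strategy X' \<longrightarrow> payoff1 v1 X' Y \<le> payoff1 v1 X Y) \<and>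
     (\<forall>Y'. strategy Y' \<longrightarrow> payoff2 v2 Y' X \<le> payoff2 v2 Y X)"

definition lotto_H :: "nat pmf \<Rightarrow> nat pmf \<Rightarrow> real" where
  "lotto_H X Y = prob_gt X Y - prob_gt Y X"

definition lotto_NE :: "real \<Rightarrow> real \<Rightarrow> nat pmf \<Rightarrow> nat pmf \<Rightarrow> bool" where
  "lotto_NE a b X Y \<longleftrightarrow>
     strategy X \<and> mean X = a \<and> strategy Y \<and> mean Y = b \<and>
     (\<forall>X'. strategy X' \<and> mean X' = a \<longrightarrow> lotto_H X' Y \<le> lotto_H X Y) \<and>
     (\<forall>Y'. strategy Y' \<and> mean Y' = b \<longrightarrow> lotto_H Y' X \<le> lotto_H Y X)"

definition U_O :: "nat \<Rightarrow> nat pmf" where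
  "U_O m = pmf_of_set ((\<lambda>k. 2 * k + 1) ` {..<m})"

end

theory Submission
  imports Defs
begin

lemma measure_bind_pmf_real:
  "measure_pmf.prob (bind_pmf M N) S = (\<integral>x. measure_pmf.prob (N x) S \<partial>measure_pmf M)"
proof -
  have "emeasure (measure_pmf (bind_pmf M N)) S = (\<integral>\<^sup>+x. ennreal (measure_pmf.prob (N x) S) \<partial>measure_pmf M)"
    unfolding emeasure_bind_pmf by (simp add: measure_pmf.emeasure_eq_measure)
  also have "\<dots> = ennreal (\<integral>x. measure_pmf.prob (N x) S \<partial>measure_pmf M)"
    by (intro nn_integral_eq_integral measure_pmf.integrable_const_bound[where B=1]) auto
  finally show ?thesis
    by (simp add: measure_pmf.emeasure_eq_measure integral_nonneg)
qed

lemma measure_pair_pmf: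
  "measure_pmf.prob (pair_pmf A B) S = (\<integral>a. measure_pmf.prob B {b. (a,b) \<in> S} \<partial>measure_pmf A)"
proof -
  have eq: "pair_pmf A B = bind_pmf A (\<lambda>x. map_pmf (Pair x) B)" by (simp add: pair_pmf_def map_pmf_def)
  show ?thesis unfolding eq measure_bind_pmf_real by (simp add: vimage_def)
qed

lemma gt_int: "prob_gt A B = (\<integral>a. measure_pmf.prob B {..<a} \<partial>measure_pmf A)"
  unfolding prob_gt_def measure_pair_pmf by (simp add: lessThan_def)

lemma eq_int: "prob_eq A B = (\<integral>a. pmf B a \<partial>measure_pmf A)"
  unfolding prob_eq_def measure_pair_pmf by (simp add: measure_pmf_single[symmetric] del: measure_pmf_single)

lemma swap_measure: "measure_pmf.prob (pair_pmf B A) S = measure_pmf.prob (pair_pmf A B) ((\<lambda>(x, y). (y, x)) -` S)"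
  by (subst pair_commute_pmf) simp

lemma eq_sym: "prob_eq A B = prob_eq B A"
  unfolding prob_eq_def swap_measure[of A B] by (rule arg_cong[where f="measure_pmf.prob _"]) auto

lemma gt_swap: "prob_gt B A = measure_pmf.prob (pair_pmf A B) {p. fst p < snd p}"
  unfolding prob_gt_def swap_measure[of A B] by (rule arg_cong[where f="measure_pmf.prob _"]) auto

lemma sum1: "prob_gt A B + prob_gt B A + prob_eq A B = 1"
proof -
  let ?M = "measure_pmf (pair_pmf A B)"
  have "measure ?M ({p. fst p > snd p} \<union> {p. fst p < snd p} \<union> {p. fst p = snd p})
     = measure ?M ({p. fst p > snd p} \<union> {p. fst p < snd p}) + measure ?M {p. fst p = snd p}"
    by (rule measure_pmf.finite_measure_Union) auto
  also have "measure ?M ({p. fst p > snd p} \<union> {p. fst p < snd p}) = measure ?M {p. fst p > snd p} + measure ?M {p. fst p < snd p}"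
    by (rule measure_pmf.finite_measure_Union) auto
  also have "{p. fst p > snd p} \<union> {p. fst p < snd p} \<union> {p. fst p = snd p} = (UNIV :: (nat \<times> nat) set)" by auto
  finally have "measure ?M {p. fst p > snd p} + measure ?M {p. fst p < snd p} + measure ?M {p. fst p = snd p} = 1" by simp
  thus ?thesis unfolding gt_swap[where A=A and B=B] prob_gt_def[of A B] prob_eq_def .
qed

definition gf :: "nat pmf \<Rightarrow> nat \<Rightarrow> real" where
  "gf B a = measure_pmf.prob B {..<a} + pmf B a / 2"

lemma gf_nonneg: "0 \<le> gf B a"
  unfolding gf_def by (simp add: pmf_nonneg)

lemma gf_le: "gf B a \<le> 2"
  unfolding gf_def using measure_pmf.prob_le_1[of B "{..<a}"] pmf_le_1[of B a] by linarith

lemma integrable_gf: "integrable (measure_pmf A) (gf B)"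
  by (intro measure_pmf.integrable_const_bound[where B=2]) (auto simp: gf_nonneg gf_le)

lemma L: "prob_gt A B + prob_eq A B / 2 = (\<integral>a. gf B a \<partial>measure_pmf A)"
proof -
  have i1: "integrable (measure_pmf A) (\<lambda>a. measure_pmf.prob B {..<a})"
    by (intro measure_pmf.integrable_const_bound[where B=1]) auto
  have i2: "integrable (measure_pmf A) (\<lambda>a. pmf B a / 2)"
    by (intro measure_pmf.integrable_const_bound[where B=1]) (use pmf_le_1[of B] in \<open>auto simp: pmf_nonneg intro!: AE_I2 order.trans[OF pmf_le_1[of B]]\<close>)
  show ?thesis unfolding gt_int eq_int gf_def
    using Bochner_Integration.integral_add[OF i1 i2] by simp
qed

lemma gt_ret: "prob_gt (return_pmf j) X = measure_pmf.prob X {..<j}"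
  unfolding prob_gt_def pair_return_pmf1 by (simp add: vimage_def lessThan_def)

lemma eq_ret: "prob_eq (return_pmf j) X = pmf X j"
  unfolding prob_eq_def pair_return_pmf1
  by (simp add: vimage_def measure_pmf_single[symmetric] del: measure_pmf_single)

lemma strategy_ret: "strategy (return_pmf j)"
  unfolding strategy_def by (rule integrable_measure_pmf_finite) simp

lemma mean_ret: "mean (return_pmf j) = real j"
  unfolding mean_def by simp

lemma payoff2_ret: "payoff2 v2 (return_pmf j) X = v2 * gf X j - real j"
  unfolding payoff2_def gf_def using eq_sym[of X "return_pmf j"]
  by (simp add: gt_ret eq_ret mean_ret algebra_simps)

lemma meas_Suc: "measure_pmf.prob X {..<Suc j} = measure_pmf.prob X {..<j} + pmf X j"
proof -
  have "measure_pmf.prob X ({..<j} \<union> {j}) = measure_pmf.prob X {..<j} + measure_pmf.prob X {j}"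
    by (rule measure_pmf.finite_measure_Union) auto
  then show ?thesis by (simp add: lessThan_Suc measure_pmf_single)
qed

lemma sum_odd: "(\<Sum>k<m. real (2*k+1)) = real m * real m"
  by (induction m) (auto simp: algebra_simps)

lemma U_facts:
  assumes "m \<ge> 1"
  shows "U_O m = pmf_of_set ((\<lambda>k. 2*k+1) ` {..<m})" "finite ((\<lambda>k. 2*k+1) ` {..<m})"
    "(\<lambda>k. 2*k+1) ` {..<m} \<noteq> {}" "card ((\<lambda>k::nat. 2*k+1) ` {..<m}) = m"
proof -
  have "0 \<in> {..<m}" using assms by simp
  then show "U_O m = pmf_of_set ((\<lambda>k. 2*k+1) ` {..<m})" "finite ((\<lambda>k. 2*k+1) ` {..<m})"
    "(\<lambda>k. 2*k+1) ` {..<m} \<noteq> {}" "card ((\<lambda>k::nat. 2*k+1) ` {..<m}) = m"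
    by (auto simp: U_O_def card_image inj_on_def)
qed

lemma strategy_U: assumes "m \<ge> 1" shows "strategy (U_O m)"
  unfolding strategy_def U_facts[OF assms]
  by (rule integrable_measure_pmf_finite) (subst set_pmf_of_set[OF U_facts(3,2)[OF assms]], rule U_facts(2)[OF assms])

lemma mean_U: assumes "m \<ge> 1" shows "mean (U_O m) = real m"
proof -
  have "mean (U_O m) = (\<Sum>x\<in>(\<lambda>k. 2*k+1) ` {..<m}. real x) / real m"
    unfolding mean_def U_facts(1)[OF assms]
    using integral_pmf_of_set[OF U_facts(3,2)[OF assms], of real] U_facts(4)[OF assms] by simp
  also have "(\<Sum>x\<in>(\<lambda>k. 2*k+1) ` {..<m}. real x) = (\<Sum>k<m. real (2*k+1))"
    by (subst sum.reindex) (auto simp: inj_on_def)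
  finally show ?thesis using assms sum_odd[of m] by simp
qed

lemma gf_U: assumes "m \<ge> 1" shows "2 * real m * gf (U_O m) y \<le> real y"
proof -
  define S where "S = (\<lambda>k::nat. 2*k+1) ` {..<m}"
  have cS: "card S = m" and fS: "finite S" and neS: "S \<noteq> {}" using U_facts[OF assms] by (auto simp: S_def)
  have "S \<inter> {..<y} \<subseteq> (\<lambda>k. 2*k+1) ` {..<y div 2}" unfolding S_def by auto
  hence "card (S \<inter> {..<y}) \<le> card ((\<lambda>k::nat. 2*k+1) ` {..<y div 2})" by (intro card_mono) auto
  also have "\<dots> \<le> y div 2" using card_image_le[of "{..<y div 2}" "\<lambda>k::nat. 2*k+1"] by simp
  finally have c: "card (S \<inter> {..<y}) \<le> y div 2" .
  have nat_ineq: "2 * card (S \<inter> {..<y}) + (if y \<in> S then 1 else 0) \<le> y"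
  proof (cases "y \<in> S")
    case True
    then have "odd y" unfolding S_def by auto
    then have "2 * (y div 2) + 1 = y" by presburger
    then show ?thesis using c True by simp
  next
    case False
    have "2 * (y div 2) \<le> y" by simp
    then show ?thesis using c False by simp
  qed
  have "gf (U_O m) y = card (S \<inter> {..<y}) / m + (if y \<in> S then 1 else 0) / m / 2"
    unfolding gf_def U_facts(1)[OF assms] S_def[symmetric]
    using measure_pmf_of_set[OF neS fS, of "{..<y}"] pmf_of_set[OF neS fS, of y] cS
    by (simp add: indicator_def)
  hence "2 * real m * gf (U_O m) y = real (2 * card (S \<inter> {..<y}) + (if y \<in> S then 1 else 0))"
    using assms by (simp add: field_simps)
  also have "\<dots> \<le> real y" using nat_ineq by linarith
  finally show ?thesis .
qed

lemma comb:
  fixes X :: "nat pmf" and m :: nat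
  assumes m: "m \<ge> 1"
    and le: "\<And>j. 2 * real m * gf X j \<le> real j"
    and eqs: "\<And>x. x \<in> set_pmf X \<Longrightarrow> 2 * real m * gf X x = real x"
  shows "X = U_O m"
proof -
  have mpos: "real m > 0" using m by simp
  have step: "pmf X (2*i) = 0 \<and> pmf X (2*i+1) = 1/m"
    if c: "measure_pmf.prob X {..<2*i} = real i / m" and i: "i < m" for i
  proof -
    have p0: "pmf X (2*i) = 0"
    proof -
      have "2 * real m * gf X (2*i) \<le> real (2*i)" by (rule le)
      hence "2 * real m * (real i / m + pmf X (2*i)/2) \<le> 2 * real i" using c by (simp add: gf_def)
      hence "real m * pmf X (2*i) \<le> 0" using mpos by (simp add: algebra_simps)
      thus ?thesis using mpos pmf_nonneg[of X "2*i"] by (simp add: mult_le_0_iff)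
    qed
    have c1: "measure_pmf.prob X {..<2*i+1} = real i / m" using c p0 meas_Suc[of X "2*i"] by simp
    have ex: "\<exists>x. x \<in> set_pmf X \<and> x \<ge> 2*i+1"
    proof (rule ccontr)
      assume "\<not> ?thesis"
      hence "measure_pmf.prob X (UNIV - {..<2*i+1}) = 0" by (auto simp: measure_pmf_zero_iff)
      hence "measure_pmf.prob X {..<2*i+1} = 1" using measure_pmf.prob_compl[of "{..<2*i+1}" X] by simp
      thus False using c1 i mpos by (simp add: field_simps)
    qed
    define x where "x = (LEAST x. x \<in> set_pmf X \<and> x \<ge> 2*i+1)"
    have x: "x \<in> set_pmf X \<and> x \<ge> 2*i+1" unfolding x_def by (rule LeastI_ex) (rule ex)
    have least: "x \<le> y" if "y \<in> set_pmf X" "y \<ge> 2*i+1" for y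
      unfolding x_def by (rule Least_le) (use that in simp)
    have "measure_pmf.prob X {..<x} = measure_pmf.prob X ({..<2*i+1} \<union> {2*i+1..<x})"
      by (rule arg_cong[where f="measure_pmf.prob X"]) (use x in auto)
    also have "\<dots> = measure_pmf.prob X {..<2*i+1} + measure_pmf.prob X {2*i+1..<x}"
      by (rule measure_pmf.finite_measure_Union) auto
    also have "measure_pmf.prob X {2*i+1..<x} = 0"
      unfolding measure_pmf_zero_iff using least by fastforce
    finally have cx: "measure_pmf.prob X {..<x} = real i / m" using c1 by simp
    have "2 * real m * gf X x = real x" using eqs x by blast
    moreover have "2 * real m * (real i / m + pmf X x / 2) = 2 * real i + real m * pmf X x"
      using mpos by (simp add: field_simps)
    ultimately have e1: "2 * real i + real m * pmf X x = real x" using cx by (simp add: gf_def)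
    have g: "real i / m + pmf X x \<le> gf X (Suc x)"
      unfolding gf_def using meas_Suc[of X x] cx pmf_nonneg[of X "Suc x"] by simp
    have "2 * real m * (real i / m + pmf X x) \<le> 2 * real m * gf X (Suc x)"
      using g mpos by (intro mult_left_mono) auto
    also have "\<dots> \<le> real (Suc x)" by (rule le)
    also have "2 * real m * (real i / m + pmf X x) = 2 * real i + 2 * (real m * pmf X x)"
      using mpos by (simp add: field_simps)
    finally have e2: "2 * real i + 2 * (real m * pmf X x) \<le> real x + 1" by simp
    have "real x \<le> 2 * real i + 1" using e1 e2 by linarith
    hence xe: "x = 2*i+1" using x by linarith
    have "real m * pmf X (2*i+1) = 1" using e1 xe by simp
    hence "pmf X (2*i+1) = 1/m" using mpos by (simp add: field_simps)
    with p0 show ?thesis by simp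
  qed
  have ind: "measure_pmf.prob X {..<2*i} = real i / m \<and> (\<forall>k<i. pmf X (2*k) = 0 \<and> pmf X (2*k+1) = 1/m)"
    if "i \<le> m" for i
    using that
  proof (induction i)
    case 0
    then show ?case by simp
  next
    case (Suc i)
    then have IH: "measure_pmf.prob X {..<2*i} = real i / m" "\<forall>k<i. pmf X (2*k) = 0 \<and> pmf X (2*k+1) = 1/m"
      and i: "i < m" by auto
    have s: "pmf X (2*i) = 0 \<and> pmf X (2*i+1) = 1/m" using step[OF IH(1) i] .
    have "measure_pmf.prob X {..<2*Suc i} = measure_pmf.prob X {..<2*i} + pmf X (2*i) + pmf X (2*i+1)"
      using meas_Suc[of X "2*i"] meas_Suc[of X "Suc (2*i)"] by simp
    also have "\<dots> = real (Suc i) / m" using IH(1) s mpos by (simp add: field_simps)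
    finally show ?case using IH(2) s less_Suc_eq by auto
  qed
  from ind[of m] have full: "measure_pmf.prob X {..<2*m} = 1" and pk: "\<And>k. k < m \<Longrightarrow> pmf X (2*k) = 0 \<and> pmf X (2*k+1) = 1/m"
    using mpos by auto
  define S where "S = (\<lambda>k::nat. 2*k+1) ` {..<m}"
  have cS: "card S = m" and fS: "finite S" and neS: "S \<noteq> {}" using U_facts[OF m] by (auto simp: S_def)
  show ?thesis
  proof (rule pmf_eqI)
    fix x
    have pU: "pmf (U_O m) x = indicator S x / m"
      unfolding U_facts(1)[OF m] S_def[symmetric] using pmf_of_set[OF neS fS, of x] cS by simp
    show "pmf X x = pmf (U_O m) x"
    proof (cases "x < 2*m")
      case True
      define k where "k = x div 2"
      have k: "k < m" using True unfolding k_def by simp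
      show ?thesis
      proof (cases "even x")
        case True
        then have "x = 2*k" unfolding k_def by simp
        moreover have "x \<notin> S" using True unfolding S_def by auto
        ultimately show ?thesis using pU pk[OF k] by simp
      next
        case False
        then have "x = 2*k+1" unfolding k_def by presburger
        moreover have "x \<in> S" using k \<open>x = 2*k+1\<close> unfolding S_def by auto
        ultimately show ?thesis using pU pk[OF k] by simp
      qed
    next
      case False
      have "measure_pmf.prob X (UNIV - {..<2*m}) = 0"
        using measure_pmf.prob_compl[of "{..<2*m}" X] full by simp
      hence "x \<notin> set_pmf X" using False by (auto simp: measure_pmf_zero_iff)
      hence "pmf X x = 0" by (simp add: pmf_eq_0_set_pmf)
      moreover have "x \<notin> S" using False unfolding S_def by auto
      ultimately show ?thesis using pU by simp
    qed
  qed
qed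

lemma lotto_H_eq: "lotto_H A B = 2 * (prob_gt A B + prob_eq A B / 2) - 1"
  unfolding lotto_H_def using sum1[of A B] by simp

theorem lemma1:
  fixes v1 v2 b :: real and m :: nat and X Y :: "nat pmf"
  assumes "v1 \<ge> v2" and "v2 > 0" and "m \<ge> 1"
    and "0 < b" and "b < real m"
    and "mean X = real m" and "mean Y = b"
    and "allpay_NE v1 v2 X Y"
  shows "real m = v2 / 2 \<and> lotto_NE (real m) b X Y \<and> X = U_O m"
proof -
  from assms(8) have sX: "strategy X" and sY: "strategy Y"
    and NE1: "\<And>X'. strategy X' \<Longrightarrow> payoff1 v1 X' Y \<le> payoff1 v1 X Y"
    and NE2: "\<And>Y'. strategy Y' \<Longrightarrow> payoff2 v2 Y' X \<le> payoff2 v2 Y X"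
    unfolding allpay_NE_def by auto
  have v1: "v1 > 0" using assms by linarith
  have mpos: "real m > 0" using assms by simp
  define w where "w = prob_gt X Y + prob_eq X Y / 2"
  define wU where "wU = prob_gt (U_O m) Y + prob_eq (U_O m) Y / 2"
  have "payoff1 v1 (U_O m) Y \<le> payoff1 v1 X Y" by (rule NE1[OF strategy_U[OF assms(3)]])
  hence "v1 * wU \<le> v1 * w" unfolding payoff1_def wU_def w_def using mean_U[OF assms(3)] assms(6)
    by (simp add: algebra_simps)
  hence h1: "wU \<le> w" using v1 by simp
  have iY: "integrable (measure_pmf Y) (\<lambda>y. real y)" using sY unfolding strategy_def .
  have iX: "integrable (measure_pmf X) (\<lambda>y. real y)" using sX unfolding strategy_def .
  have "prob_gt Y (U_O m) + prob_eq Y (U_O m) / 2 = (\<integral>y. gf (U_O m) y \<partial>measure_pmf Y)" by (rule L)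
  also have "\<dots> \<le> (\<integral>y. real y / (2*m) \<partial>measure_pmf Y)"
  proof (rule integral_mono)
    show "integrable (measure_pmf Y) (gf (U_O m))" by (rule integrable_gf)
    show "integrable (measure_pmf Y) (\<lambda>y. real y / (2*m))" using iY by simp
    fix y show "gf (U_O m) y \<le> real y / (2*m)"
      using gf_U[OF assms(3), of y] mpos by (simp add: field_simps)
  qed
  also have "\<dots> = b / (2*m)" using assms(7) unfolding mean_def by simp
  finally have hU: "prob_gt Y (U_O m) + prob_eq Y (U_O m) / 2 \<le> b / (2*m)" .
  have "wU = 1 - (prob_gt Y (U_O m) + prob_eq Y (U_O m)/2)"
    using sum1[of "U_O m" Y] eq_sym[of "U_O m" Y] unfolding wU_def by simp
  hence c: "1 - w \<le> b / (2*m)" using hU h1 by linarith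
  define u2 where "u2 = payoff2 v2 Y X"
  have gYX: "prob_gt Y X = 1 - prob_gt X Y - prob_eq X Y" using sum1[of X Y] by linarith
  have hu2: "u2 = v2 * (1 - w) - b" unfolding u2_def payoff2_def w_def using assms(7)
    by (simp add: gYX field_simps)
  have "payoff2 v2 X X = v2/2 * (2*prob_gt X X + prob_eq X X) - m" unfolding payoff2_def using assms(6)
    by (simp add: algebra_simps)
  also have "2*prob_gt X X + prob_eq X X = 1" using sum1[of X X] by simp
  finally have h3: "v2/2 - m \<le> u2" using NE2[OF sX] unfolding u2_def by simp
  have "0 \<le> v2 * gf X 0" using gf_nonneg[of X 0] assms(2) by simp
  hence h4: "0 \<le> u2" using NE2[OF strategy_ret[of 0]]
    unfolding u2_def payoff2_ret by simp
  have "v2 * (1 - w) \<le> v2 * (b / (2*m))" using c assms(2) by (intro mult_left_mono) auto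
  hence u2le: "u2 \<le> v2 * b / (2*m) - b" using hu2 by simp
  have "b \<le> v2 * b / (2*m)" using u2le h4 by linarith
  hence "b * (2*m) \<le> v2 * b" using mpos by (simp add: field_simps)
  hence "2*m * b \<le> v2 * b" by (simp add: algebra_simps)
  hence v2ge: "2*m \<le> v2" using assms(4) by (rule mult_right_le_imp_le) 
  have "v2/2 - m \<le> v2 * b / (2*m) - b" using h3 u2le by linarith
  hence "2*m*(v2/2 - m) \<le> 2*m*(v2 * b / (2*m) - b)" using mpos by (intro mult_left_mono) auto
  also have "2*m*(v2 * b / (2*m) - b) = v2 * b - 2*m*b" using mpos by (simp add: field_simps)
  also have "2*m*(v2/2 - m) = m * v2 - 2*m*m" by (simp add: algebra_simps)
  finally have "v2 * (m - b) \<le> (2*m) * (m - b)" by (simp add: algebra_simps)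
  hence v2le: "v2 \<le> 2*m" using assms(5) by (intro mult_right_le_imp_le[of v2 "m - b" "2*m"]) auto
  have v2eq: "v2 = 2 * m" using v2ge v2le by linarith
  have u20: "u2 = 0" using u2le h4 v2eq mpos by simp
  have h5: "2 * real m * gf X j \<le> real j" for j
    using NE2[OF strategy_ret[of j]] v2eq u20 unfolding u2_def[symmetric] payoff2_ret by simp
  have h6: "(\<integral>x. gf X x \<partial>measure_pmf X) = 1/2" using L[of X X] sum1[of X X] by simp
  have ig: "integrable (measure_pmf X) (\<lambda>x. real x - 2 * real m * gf X x)"
    using iX integrable_gf[of X X] by simp
  have "(\<integral>x. real x - 2 * real m * gf X x \<partial>measure_pmf X) = mean X - 2 * real m * (1/2)"
    using iX integrable_gf[of X X] h6 unfolding mean_def by simp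
  also have "\<dots> = 0" using assms(6) by simp
  finally have "AE x in measure_pmf X. real x - 2 * real m * gf X x = 0"
    using integral_nonneg_eq_0_iff_AE[OF ig] h5 by simp
  hence eqs: "x \<in> set_pmf X \<Longrightarrow> 2 * real m * gf X x = real x" for x
    by (simp add: AE_measure_pmf_iff)
  have XU: "X = U_O m" by (rule comb[OF assms(3) h5 eqs])
  have lotto: "lotto_NE (real m) b X Y"
    unfolding lotto_NE_def
  proof (intro conjI allI impI)
    show "strategy X" "mean X = real m" "strategy Y" "mean Y = b" using sX sY assms(6,7) by auto
  next
    fix X' assume a: "strategy X' \<and> mean X' = real m"
    have "payoff1 v1 X' Y \<le> payoff1 v1 X Y" using NE1 a by simp
    hence "v1 * (prob_gt X' Y + prob_eq X' Y / 2) \<le> v1 * (prob_gt X Y + prob_eq X Y / 2)"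
      unfolding payoff1_def using a assms(6) by (simp add: algebra_simps)
    hence "prob_gt X' Y + prob_eq X' Y / 2 \<le> prob_gt X Y + prob_eq X Y / 2" using v1 by simp
    thus "lotto_H X' Y \<le> lotto_H X Y" unfolding lotto_H_eq by simp
  next
    fix Y' assume a: "strategy Y' \<and> mean Y' = b"
    have "payoff2 v2 Y' X \<le> payoff2 v2 Y X" using NE2 a by simp
    hence "v2 * (prob_gt Y' X + prob_eq Y' X / 2) \<le> v2 * (prob_gt Y X + prob_eq Y X / 2)"
      unfolding payoff2_def using a assms(7) eq_sym[of X Y'] eq_sym[of X Y] by (simp add: algebra_simps)
    hence "prob_gt Y' X + prob_eq Y' X / 2 \<le> prob_gt Y X + prob_eq Y X / 2" using assms(2) by simp
    thus "lotto_H Y' X \<le> lotto_H Y X" unfolding lotto_H_eq by simp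
  qed
  show ?thesis using v2eq lotto XU by simp
qed

end
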